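(* Let $R,W,Q$ be symmetric BIDMCs and $p\in(0,1)$. If $pR+(1-p)W\preccurlyeq pR+(1-p)Q$, then $W\preccurlyeq Q$.
   Context: A binary-input discrete memoryless channel (BIDMC) $W$ has input $x$ uniformly distributed on $\{0,1\}$, a discrete output alphabet and transition probabilities $\Pr(y\mid x)$. Its LR-profile is $P_W(\varepsilon)=\Pr\big(\mathcal L_W(y)=\varepsilon/(1-\varepsilon)\big)$, where $\mathcal L_W(\hat y)=\Pr(y=\hat y\mid x=0)/\Pr(y=\hat y\mid x=1)$; $W\cong W'$ if their LR-profiles coincide. $W'\preccurlyeq W$ ($W'$ is a degradation of $W$) if there is a channel $T$ from the output alphabet $\mathcal Y$ of $W$ to that of $W'$ with $\Pr(y'\mid x'=a)=\sum_{y\in\mathcal Y}\Pr(y\mid x=a)T(y'\mid y)$, $a\in\{0,1\}$. For BIDMCs $W_1,W_2$ and $p\in[0,1]$, $pW_1+(1-p)W_2$ is the random switching channel that, with probability $p$ (resp. $1-p$), independently of the input, sends the input through $W_1$ (resp. $W_2$) and outputs the channel output together with the index of the channel used. A BIDMC is symmetric if $P_W(\varepsilon)=P_W(1-\varepsilon)$ for all $\varepsilon\in[0,1]$. *)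

theory Defs
  imports "HOL-Probability.Probability"
begin

text \<open>A binary-input channel with output type 'y: input bit a (False = 0, True = 1)
  is mapped to the output distribution Pr(y | x = a).\<close>
type_synonym 'y channel = "bool \<Rightarrow> 'y pmf"

definition bidmc :: "'y channel \<Rightarrow> bool" where
  "bidmc W \<longleftrightarrow> finite (set_pmf (W False)) \<and> finite (set_pmf (W True))"

definition LR :: "'y channel \<Rightarrow> 'y \<Rightarrow> ereal" where
  "LR W y = (if pmf (W True) y = 0 then \<infinity> else ereal (pmf (W False) y / pmf (W True) y))"

definition eps_ratio :: "real \<Rightarrow> ereal" where
  "eps_ratio e = (if e = 1 then \<infinity> else ereal (e / (1 - e)))"

definition out_prob :: "'y channel \<Rightarrow> 'y set \<Rightarrow> real" where
  "out_prob W A = (measure_pmf.prob (W False) A + measure_pmf.prob (W True) A) / 2"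

definition LR_profile :: "'y channel \<Rightarrow> real \<Rightarrow> real" where
  "LR_profile W e = out_prob W {y. LR W y = eps_ratio e}"

definition symmetric_channel :: "'y channel \<Rightarrow> bool" where
  "symmetric_channel W \<longleftrightarrow> (\<forall>e\<in>{0..1}. LR_profile W e = LR_profile W (1 - e))"

definition degraded :: "'z channel \<Rightarrow> 'y channel \<Rightarrow> bool" where
  "degraded W' W \<longleftrightarrow> (\<exists>T :: 'y \<Rightarrow> 'z pmf. \<forall>a. W' a = bind_pmf (W a) T)"

text \<open>Random switching channel p W1 + (1-p) W2; the output records which channel was used
  (Inl for W1, Inr for W2).\<close>
definition switch_channel :: "real \<Rightarrow> 'y channel \<Rightarrow> 'z channel \<Rightarrow> ('y + 'z) channel" where
  "switch_channel p W1 W2 a =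
     bind_pmf (bernoulli_pmf p) (\<lambda>b. if b then map_pmf Inl (W1 a) else map_pmf Inr (W2 a))"

end

theory Submission
  imports Defs
begin

definition supp :: "'y channel \<Rightarrow> 'y set" where
  "supp V = set_pmf (V False) \<union> set_pmf (V True)"

definition lin :: "('z \<Rightarrow> bool \<Rightarrow> real) \<Rightarrow> 'z \<Rightarrow> 'y channel \<Rightarrow> 'y \<Rightarrow> real" where
  "lin c z V y = c z False * pmf (V False) y + c z True * pmf (V True) y"

definition mx :: "('z \<Rightarrow> bool \<Rightarrow> real) \<Rightarrow> 'z set \<Rightarrow> 'y channel \<Rightarrow> 'y \<Rightarrow> real" where
  "mx c Z V y = Max ((\<lambda>z. lin c z V y) ` Z)"

definition Gf :: "('z \<Rightarrow> bool \<Rightarrow> real) \<Rightarrow> 'z set \<Rightarrow> 'y channel \<Rightarrow> 'y set \<Rightarrow> real" where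
  "Gf c Z V S = (\<Sum>y\<in>S. mx c Z V y)"

lemma pmf_bind_fin:
  assumes "finite S" "set_pmf M \<subseteq> S"
  shows "pmf (bind_pmf M f) x = (\<Sum>y\<in>S. pmf M y * pmf (f y) x)"
  unfolding pmf_bind using assms
  by (subst integral_measure_pmf[of S]) auto

lemma mx_zero:
  assumes "finite Z" "Z \<noteq> {}" "y \<notin> supp V"
  shows "mx c Z V y = 0"
proof -
  have "pmf (V False) y = 0" "pmf (V True) y = 0" using assms(3)
    by (auto simp: supp_def set_pmf_iff)
  then have "(\<lambda>z. lin c z V y) ` Z = {0}" using assms(2) by (auto simp: lin_def)
  then show ?thesis by (simp add: mx_def)
qed

lemma Max_scale:
  fixes f :: "'z \<Rightarrow> real"
  assumes "finite Z" "Z \<noteq> {}" "0 \<le> p"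
  shows "Max ((\<lambda>z. p * f z) ` Z) = p * Max (f ` Z)"
proof -
  have "Max (f ` Z) \<in> f ` Z" using assms by (intro Max_in) auto
  then obtain z0 where z0: "z0 \<in> Z" "f z0 = Max (f ` Z)" by auto
  show ?thesis
  proof (rule antisym)
    show "Max ((\<lambda>z. p * f z) ` Z) \<le> p * Max (f ` Z)"
      using assms by (auto intro!: Max.boundedI mult_left_mono Max_ge)
    show "p * Max (f ` Z) \<le> Max ((\<lambda>z. p * f z) ` Z)"
      using assms z0 by (metis (no_types, lifting) Max_ge finite_imageI image_eqI)
  qed
qed

lemma nec:
  assumes S: "finite S" "supp V \<subseteq> S" and S': "finite S'" "supp V' \<subseteq> S'"
    and Z: "finite Z" "Z \<noteq> {}" and deg: "degraded V' V"
  shows "Gf c Z V' S' \<le> Gf c Z V S"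
proof -
  obtain T where T: "\<And>a. V' a = bind_pmf (V a) T"
    using deg unfolding degraded_def by blast
  have pV': "pmf (V' a) w = (\<Sum>y\<in>S. pmf (V a) y * pmf (T y) w)" for a w
  proof -
    have "set_pmf (V a) \<subseteq> S" using S by (cases a) (auto simp: supp_def)
    then show ?thesis unfolding T by (rule pmf_bind_fin[OF S(1)])
  qed
  have lin': "lin c z V' w = (\<Sum>y\<in>S. pmf (T y) w * lin c z V y)" for z w
    unfolding lin_def pV' sum_distrib_left sum.distrib[symmetric]
    by (intro sum.cong) (auto simp: algebra_simps)
  have mxle: "mx c Z V' w \<le> (\<Sum>y\<in>S. pmf (T y) w * mx c Z V y)" for w
    unfolding mx_def using Z
    by (auto simp: lin' intro!: Max.boundedI sum_mono mult_left_mono Max_ge)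
  have sumT: "mx c Z V y * (\<Sum>w\<in>S'. pmf (T y) w) = mx c Z V y" if "y \<in> S" for y
  proof (cases "y \<in> supp V")
    case True
    then obtain a where a: "y \<in> set_pmf (V a)" unfolding supp_def by auto
    have "set_pmf (T y) \<subseteq> set_pmf (V' a)" using a unfolding T by auto
    also have "\<dots> \<subseteq> S'" using S' by (cases a; auto simp: supp_def)
    finally have "(\<Sum>w\<in>S'. pmf (T y) w) = 1" using S' by (intro sum_pmf_eq_1) auto
    then show ?thesis by simp
  next
    case False
    then show ?thesis using mx_zero[OF Z False] by simp
  qed
  have "Gf c Z V' S' \<le> (\<Sum>w\<in>S'. \<Sum>y\<in>S. pmf (T y) w * mx c Z V y)"
    unfolding Gf_def by (intro sum_mono mxle)
  also have "\<dots> = (\<Sum>y\<in>S. mx c Z V y * (\<Sum>w\<in>S'. pmf (T y) w))"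
    by (subst sum.swap) (simp add: sum_distrib_left sum_distrib_right mult.commute)
  also have "\<dots> = Gf c Z V S"
    unfolding Gf_def by (intro sum.cong) (auto simp: sumT)
  finally show ?thesis .
qed

lemma pmf_switch:
  assumes "0 \<le> p" "p \<le> 1"
  shows "pmf (switch_channel p R V a) (Inl y) = p * pmf (R a) y"
    and "pmf (switch_channel p R V a) (Inr z) = (1 - p) * pmf (V a) z"
proof -
  have gen: "pmf (switch_channel p R V a) x =
     p * pmf (map_pmf Inl (R a)) x + (1 - p) * pmf (map_pmf Inr (V a)) x" for x
    unfolding switch_channel_def pmf_bind using assms
    by (subst integral_measure_pmf[of UNIV]) (auto simp: UNIV_bool)
  have a: "pmf (map_pmf Inl (R a)) (Inr z) = 0" "pmf (map_pmf Inr (V a)) (Inl y) = 0"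
    by (auto simp: pmf_eq_0_set_pmf)
  show "pmf (switch_channel p R V a) (Inl y) = p * pmf (R a) y"
    unfolding gen a by (simp add: pmf_map_inj' inj_def)
  show "pmf (switch_channel p R V a) (Inr z) = (1 - p) * pmf (V a) z"
    unfolding gen a by (simp add: pmf_map_inj' inj_def)
qed

lemma supp_switch:
  assumes "0 \<le> p" "p \<le> 1"
  shows "supp (switch_channel p R V) \<subseteq> Inl ` supp R \<union> Inr ` supp V"
proof
  fix x assume x: "x \<in> supp (switch_channel p R V)"
  then obtain a where a: "pmf (switch_channel p R V a) x \<noteq> 0"
    unfolding supp_def by (auto simp: set_pmf_iff)
  show "x \<in> Inl ` supp R \<union> Inr ` supp V"
  proof (cases x)
    case (Inl y)
    then have "pmf (R a) y \<noteq> 0" using a by (simp add: pmf_switch[OF assms])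
    then have "y \<in> supp R" by (cases a; auto simp: supp_def set_pmf_iff)
    then show ?thesis using Inl by auto
  next
    case (Inr y)
    then have "pmf (V a) y \<noteq> 0" using a by (simp add: pmf_switch[OF assms])
    then have "y \<in> supp V" by (cases a; auto simp: supp_def set_pmf_iff)
    then show ?thesis using Inr by auto
  qed
qed

lemma Gf_switch:
  assumes p: "0 < p" "p < 1" and fin: "finite SR" "finite SV" and Z: "finite Z" "Z \<noteq> {}"
  shows "Gf c Z (switch_channel p R V) (Inl ` SR \<union> Inr ` SV) = p * Gf c Z R SR + (1 - p) * Gf c Z V SV"
proof -
  have l1: "mx c Z (switch_channel p R V) (Inl y) = p * mx c Z R y" for y
  proof -
    have "mx c Z (switch_channel p R V) (Inl y) = Max ((\<lambda>z. p * lin c z R y) ` Z)"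
      unfolding mx_def lin_def using p by (simp add: pmf_switch algebra_simps)
    also have "\<dots> = p * mx c Z R y" unfolding mx_def using Z p by (intro Max_scale) auto
    finally show ?thesis .
  qed
  have l2: "mx c Z (switch_channel p R V) (Inr y) = (1 - p) * mx c Z V y" for y
  proof -
    have "mx c Z (switch_channel p R V) (Inr y) = Max ((\<lambda>z. (1 - p) * lin c z V y) ` Z)"
      unfolding mx_def lin_def using p by (simp add: pmf_switch algebra_simps)
    also have "\<dots> = (1 - p) * mx c Z V y" unfolding mx_def using Z p by (intro Max_scale) auto
    finally show ?thesis .
  qed
  have "Gf c Z (switch_channel p R V) (Inl ` SR \<union> Inr ` SV) =
     (\<Sum>y\<in>Inl ` SR. mx c Z (switch_channel p R V) y) + (\<Sum>y\<in>Inr ` SV. mx c Z (switch_channel p R V) y)"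
    unfolding Gf_def using fin by (intro sum.union_disjoint) auto
  also have "\<dots> = p * Gf c Z R SR + (1 - p) * Gf c Z V SV"
    unfolding Gf_def by (simp add: sum.reindex inj_on_def l1 l2 sum_distrib_left)
  finally show ?thesis .
qed


lemma continuous_on_coord [continuous_intros]:
  "continuous_on S (\<lambda>x. x i :: 'b::topological_space)"
  by (rule continuous_on_subset[OF continuous_on_product_coordinates]) simp

lemma suff:
  fixes W :: "'w channel" and Q :: "'q channel"
  assumes bW: "bidmc W" and bQ: "bidmc Q"
    and H: "\<And>c :: 'w \<Rightarrow> bool \<Rightarrow> real. Gf c (supp W) W (supp W) \<le> Gf c (supp W) Q (supp Q)"
  shows "degraded W Q"
proof -
  define SW where "SW = supp W"
  define SQ where "SQ = supp Q"
  have fSW: "finite SW" using bW by (simp add: SW_def supp_def bidmc_def)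
  have fSQ: "finite SQ" using bQ by (simp add: SQ_def supp_def bidmc_def)
  have neSW: "SW \<noteq> {}" using set_pmf_not_empty[of "W False"] by (auto simp: SW_def supp_def)
  then obtain w0 where w0: "w0 \<in> SW" by auto
  define I where "I = SQ \<times> SW"
  define Bx where "Bx = (\<lambda>i. if i \<in> I then {0..1::real} else {0})"
  define B where "B = PiE UNIV Bx"
  define C where "C = (\<Inter>y\<in>SQ. {T :: 'q \<times> 'w \<Rightarrow> real. (\<Sum>w\<in>SW. T (y, w)) = 1})"
  define K where "K = B \<inter> C"
  define M where "M = (\<lambda>(T :: 'q \<times> 'w \<Rightarrow> real) a w. \<Sum>y\<in>SQ. pmf (Q a) y * T (y, w))"
  define \<phi> where "\<phi> = (\<lambda>T. \<Sum>w\<in>SW. (pmf (W False) w - M T False w)\<^sup>2 + (pmf (W True) w - M T True w)\<^sup>2)"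
  have Bmem: "T \<in> B \<longleftrightarrow> (\<forall>i. T i \<in> Bx i)" for T by (simp add: B_def PiE_iff)
  have Kmem: "T \<in> K \<longleftrightarrow> (\<forall>y w. (y, w) \<in> I \<longrightarrow> 0 \<le> T (y, w) \<and> T (y, w) \<le> 1)
        \<and> (\<forall>y w. (y, w) \<notin> I \<longrightarrow> T (y, w) = 0) \<and> (\<forall>y\<in>SQ. (\<Sum>w\<in>SW. T (y, w)) = 1)" for T
    by (auto simp: K_def C_def Bmem Bx_def split: if_splits)
  have "compactin (product_topology (\<lambda>_. euclidean) UNIV) B"
    unfolding B_def compactin_PiE by (auto simp: Bx_def)
  then have cB: "compact B" by (simp add: euclidean_product_topology)
  have cC: "closed C" unfolding C_def
    by (intro closed_INT ballI closed_Collect_eq continuous_intros)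
  have cK: "compact K" unfolding K_def using cB cC by auto
  define T0 where "T0 = (\<lambda>(y, w). if y \<in> SQ \<and> w = w0 then 1 else (0::real))"
  have "T0 \<in> K" unfolding Kmem using w0 fSW by (auto simp: T0_def I_def)
  then have neK: "K \<noteq> {}" by auto
  have contphi: "continuous_on K \<phi>" unfolding \<phi>_def M_def by (intro continuous_intros)
  obtain Ts where Ts: "Ts \<in> K" and Tsmin: "\<And>T. T \<in> K \<Longrightarrow> \<phi> Ts \<le> \<phi> T"
    using continuous_attains_inf[OF cK neK contphi] by blast
  have TsK: "\<And>y w. (y, w) \<in> I \<Longrightarrow> 0 \<le> Ts (y, w)" "\<And>y w. (y, w) \<notin> I \<Longrightarrow> Ts (y, w) = 0"
     "\<And>y. y \<in> SQ \<Longrightarrow> (\<Sum>w\<in>SW. Ts (y, w)) = 1"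
    using Ts unfolding Kmem by auto
  show ?thesis
  proof (cases "\<phi> Ts = 0")
    case True
    have eq: "pmf (W a) w = M Ts a w" if "w \<in> SW" for a w
    proof -
      have "\<forall>w\<in>SW. (pmf (W False) w - M Ts False w)\<^sup>2 + (pmf (W True) w - M Ts True w)\<^sup>2 = 0"
        using True fSW unfolding \<phi>_def by (subst (asm) sum_nonneg_eq_0_iff) auto
      then show ?thesis using that by (cases a) (auto simp: add_nonneg_eq_0_iff)
    qed
    define Tk where "Tk = (\<lambda>y. if y \<in> SQ then embed_pmf (\<lambda>w. Ts (y, w)) else return_pmf w0)"
    have pTk: "pmf (Tk y) w = Ts (y, w)" if "y \<in> SQ" for y w
    proof -
      have nn: "\<And>w. 0 \<le> Ts (y, w)" using TsK(1,2) by (metis order_refl)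
      have "(\<integral>\<^sup>+w. ennreal (Ts (y, w)) \<partial>count_space UNIV) = (\<Sum>w\<in>SW. ennreal (Ts (y, w)))"
        using fSW TsK(2) that by (intro nn_integral_count_space') (auto simp: I_def)
      also have "\<dots> = ennreal (\<Sum>w\<in>SW. Ts (y, w))" using nn by (simp add: sum_ennreal)
      also have "\<dots> = 1" using TsK(3) that by simp
      finally show ?thesis unfolding Tk_def using that nn by (simp add: pmf_embed_pmf)
    qed
    show ?thesis unfolding degraded_def
    proof (intro exI allI pmf_eqI)
      fix a w
      have sQ: "set_pmf (Q a) \<subseteq> SQ" by (cases a) (auto simp: SQ_def supp_def)
      have "pmf (bind_pmf (Q a) Tk) w = (\<Sum>y\<in>SQ. pmf (Q a) y * pmf (Tk y) w)"
        by (rule pmf_bind_fin[OF fSQ sQ])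
      also have "\<dots> = M Ts a w" unfolding M_def by (intro sum.cong) (auto simp: pTk)
      also have "\<dots> = pmf (W a) w"
      proof (cases "w \<in> SW")
        case True then show ?thesis by (simp add: eq)
      next
        case False
        then have "pmf (W a) w = 0" by (cases a) (auto simp: SW_def supp_def set_pmf_iff)
        moreover have "M Ts a w = 0" unfolding M_def using False TsK(2) by (auto simp: I_def)
        ultimately show ?thesis by simp
      qed
      finally show "pmf (W a) w = pmf (bind_pmf (Q a) Tk) w" by simp
    qed
  next
    case False
    have phinn: "\<phi> Ts \<ge> 0" unfolding \<phi>_def by (intro sum_nonneg) auto
    with False have phipos: "\<phi> Ts > 0" by simp
    define d where "d = (\<lambda>w a. pmf (W a) w - M Ts a w)"
    define \<Phi> where "\<Phi> = (\<lambda>T. \<Sum>w\<in>SW. d w False * M T False w + d w True * M T True w)"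
    have Phi_alt: "\<Phi> T = (\<Sum>y\<in>SQ. \<Sum>w\<in>SW. T (y, w) * lin d w Q y)" for T
      unfolding \<Phi>_def M_def lin_def
      by (subst sum.swap) (simp add: sum_distrib_left sum.distrib[symmetric] algebra_simps)
    have var: "\<Phi> T \<le> \<Phi> Ts" if TK: "T \<in> K" for T
    proof -
      define e where "e = (\<lambda>a w. M T a w - M Ts a w)"
      define P where "P = (\<Sum>w\<in>SW. d w False * e False w + d w True * e True w)"
      define E where "E = (\<Sum>w\<in>SW. (e False w)\<^sup>2 + (e True w)\<^sup>2)"
      have PE: "P = \<Phi> T - \<Phi> Ts" unfolding P_def \<Phi>_def e_def
        by (simp add: sum_subtractf[symmetric] algebra_simps)
      have E0: "E \<ge> 0" unfolding E_def by (intro sum_nonneg) auto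
      have TKs: "\<And>y w. (y, w) \<in> I \<Longrightarrow> 0 \<le> T (y, w) \<and> T (y, w) \<le> 1"
         "\<And>y w. (y, w) \<notin> I \<Longrightarrow> T (y, w) = 0" "\<And>y. y \<in> SQ \<Longrightarrow> (\<Sum>w\<in>SW. T (y, w)) = 1"
        using TK unfolding Kmem by auto
      have TsK': "\<And>y w. (y, w) \<in> I \<Longrightarrow> Ts (y, w) \<le> 1" using Ts unfolding Kmem by auto
      have step: "2 * P \<le> t * E" if t: "0 < t" "t \<le> 1" for t
      proof -
        define Tt where "Tt = (\<lambda>i. Ts i + t * (T i - Ts i))"
        have Tt_alt: "Tt i = (1 - t) * Ts i + t * T i" for i by (simp add: Tt_def algebra_simps)
        have "Tt \<in> K" unfolding Kmem
        proof (intro conjI allI impI ballI)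
          fix y w assume yw: "(y, w) \<in> I"
          show "0 \<le> Tt (y, w)" unfolding Tt_alt using t TsK(1)[OF yw] TKs(1)[OF yw] by simp
          have "Tt (y, w) \<le> (1 - t) * 1 + t * 1" unfolding Tt_alt using t TsK'[OF yw] TKs(1)[OF yw]
            by (intro add_mono mult_left_mono) auto
          then show "Tt (y, w) \<le> 1" by simp
        next
          fix y w assume yw: "(y, w) \<notin> I"
          show "Tt (y, w) = 0" unfolding Tt_def using TsK(2)[OF yw] TKs(2)[OF yw] by simp
        next
          fix y assume y: "y \<in> SQ"
          have "(\<Sum>w\<in>SW. Tt (y, w)) = (\<Sum>w\<in>SW. Ts (y, w)) + t * ((\<Sum>w\<in>SW. T (y, w)) - (\<Sum>w\<in>SW. Ts (y, w)))"
            unfolding Tt_def by (simp add: sum.distrib sum_distrib_left[symmetric] sum_subtractf)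
          then show "(\<Sum>w\<in>SW. Tt (y, w)) = 1" using TsK(3)[OF y] TKs(3)[OF y] by simp
        qed
        then have le: "\<phi> Ts \<le> \<phi> Tt" by (rule Tsmin)
        have MTt: "M Tt a w = M Ts a w + t * e a w" for a w
          unfolding M_def e_def Tt_def
          by (simp add: sum.distrib sum_distrib_left sum_subtractf algebra_simps)
        have trm: "(pmf (W a) w - M Tt a w)\<^sup>2 = (d w a)\<^sup>2 - 2 * t * (d w a * e a w) + t\<^sup>2 * (e a w)\<^sup>2" for a w
          unfolding MTt d_def by (simp add: power2_eq_square algebra_simps)
        have "\<phi> Tt = \<phi> Ts - 2 * t * P + t\<^sup>2 * E"
          unfolding \<phi>_def trm P_def E_def d_def
          by (simp add: sum.distrib sum_subtractf sum_distrib_left algebra_simps)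
        with le have "0 \<le> t * (t * E - 2 * P)" by (simp add: power2_eq_square algebra_simps)
        then have "0 \<le> t * E - 2 * P" using t by (simp add: zero_le_mult_iff)
        then show ?thesis by simp
      qed
      have "P \<le> 0"
      proof (rule ccontr)
        assume "\<not> P \<le> 0"
        then have Pp: "P > 0" by simp
        define t where "t = min 1 (P / (E + 1))"
        have t0: "0 < t" "t \<le> 1" using Pp E0 by (auto simp: t_def)
        have "t * E \<le> (P / (E + 1)) * E" unfolding t_def using E0 by (intro mult_right_mono) auto
        also have "\<dots> < P" using Pp E0 by (simp add: field_simps)
        finally have "t * E < P" .
        with step[OF t0] Pp show False by simp
      qed
      then show ?thesis using PE by simp
    qed
    have exw: "\<exists>w. w \<in> SW \<and> lin d w Q y = mx d SW Q y" for y
    proof -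
      have "mx d SW Q y \<in> (\<lambda>w. lin d w Q y) ` SW" unfolding mx_def using fSW neSW by (intro Max_in) auto
      then show ?thesis by auto
    qed
    define wy where "wy = (\<lambda>y. SOME w. w \<in> SW \<and> lin d w Q y = mx d SW Q y)"
    have wy: "wy y \<in> SW" "lin d (wy y) Q y = mx d SW Q y" for y
      using someI_ex[OF exw[of y]] unfolding wy_def by auto
    define Th where "Th = (\<lambda>(y, w). if y \<in> SQ \<and> w = wy y then 1 else (0::real))"
    have ThK: "Th \<in> K" unfolding Kmem using wy(1) fSW by (auto simp: Th_def I_def)
    have "\<Phi> Th = (\<Sum>y\<in>SQ. \<Sum>w\<in>SW. (if w = wy y then lin d w Q y else 0))"
      unfolding Phi_alt by (intro sum.cong refl) (auto simp: Th_def)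
    also have "\<dots> = (\<Sum>y\<in>SQ. mx d SW Q y)" using fSW wy by (simp add: sum.delta')
    finally have PhiTh: "\<Phi> Th = Gf d SW Q SQ" by (simp add: Gf_def)
    have termW: "lin d w W w = (d w False * M Ts False w + d w True * M Ts True w) + ((d w False)\<^sup>2 + (d w True)\<^sup>2)" for w
      unfolding lin_def d_def by (simp add: power2_eq_square algebra_simps)
    have "(\<Sum>w\<in>SW. lin d w W w) = \<Phi> Ts + \<phi> Ts"
      by (simp only: termW sum.distrib) (simp add: \<Phi>_def \<phi>_def d_def sum.distrib)
    moreover have "(\<Sum>w\<in>SW. lin d w W w) \<le> Gf d SW W SW"
      unfolding Gf_def mx_def using fSW by (intro sum_mono Max_ge) auto
    moreover have "\<Phi> Th \<le> \<Phi> Ts" by (rule var[OF ThK])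
    moreover have "Gf d SW W SW \<le> Gf d SW Q SQ" using H[of d] by (simp add: SW_def SQ_def)
    ultimately show ?thesis using phipos PhiTh by simp
  qed
qed

theorem corollary2:
  fixes R :: "'r channel" and W :: "'w channel" and Q :: "'q channel" and p :: real
  assumes "bidmc R" "bidmc W" "bidmc Q"
    and "symmetric_channel R" "symmetric_channel W" "symmetric_channel Q"
    and "0 < p" "p < 1"
    and "degraded (switch_channel p R W) (switch_channel p R Q)"
  shows "degraded W Q"
proof -
  have fR: "finite (supp R)" using assms(1) by (simp add: supp_def bidmc_def)
  have fW: "finite (supp W)" using assms(2) by (simp add: supp_def bidmc_def)
  have fQ: "finite (supp Q)" using assms(3) by (simp add: supp_def bidmc_def)
  have neW: "supp W \<noteq> {}" using set_pmf_not_empty[of "W False"] by (auto simp: supp_def)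
  have p: "0 \<le> p" "p \<le> 1" using assms(7,8) by auto
  have "Gf c (supp W) W (supp W) \<le> Gf c (supp W) Q (supp Q)" for c
  proof -
    have "Gf c (supp W) (switch_channel p R W) (Inl ` supp R \<union> Inr ` supp W)
        \<le> Gf c (supp W) (switch_channel p R Q) (Inl ` supp R \<union> Inr ` supp Q)"
      using fR fW fQ neW supp_switch[OF p, of R Q] supp_switch[OF p, of R W] assms(9)
      by (intro nec) auto
    then have "p * Gf c (supp W) R (supp R) + (1 - p) * Gf c (supp W) W (supp W)
        \<le> p * Gf c (supp W) R (supp R) + (1 - p) * Gf c (supp W) Q (supp Q)"
      using Gf_switch[OF assms(7,8) fR fW fW neW] Gf_switch[OF assms(7,8) fR fQ fW neW] by simp
    then show ?thesis using assms(8) by simp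
  qed
  then show ?thesis using suff[OF assms(2,3)] by blast
qed

end
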